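(* Let $r_1,\ldots,r_m\in(0,\infty)$, $s\in(0,\infty]$, $p_1,\ldots,p_m\in(0,\infty]$ with $(\vec r,s)\le\vec p$, and let $w_1,\ldots,w_m$ be weights with $w=\prod_jw_j$. Then $\vec w\in A_{\vec p,(\vec r,s)}$ if and only if there are real numbers $\frac1{s_1},\ldots,\frac1{s_m}$ with $\frac1{s_j}\le\frac1{p_j}$ and $\sum_{j=1}^m\frac1{s_j}=\frac1s$ such that $\vec w\in A_{\vec p(s),(\vec r(s),\infty)}$, where \[ \vec p(s)=\Big(\tfrac{1}{\frac1{p_1}-\frac1{s_1}},\ldots,\tfrac{1}{\frac1{p_m}-\frac1{s_m}}\Big),\qquad \vec r(s)=\Big(\tfrac{1}{\frac1{r_1}-\frac1{s_1}},\ldots,\tfrac{1}{\frac1{r_m}-\frac1{s_m}}\Big). \] Moreover, in this case $[\vec w]_{\vec p,(\vec r,s)}=[\vec w]_{\vec p(s),(\vec r(s),\infty)}$.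
   Context: For a cube $Q$, $\langle f\rangle_{t,Q}=(\frac1{|Q|}\int_Q|f|^t)^{1/t}$ for $0<t<\infty$, $\langle f\rangle_{\infty,Q}=\operatorname{ess\,sup}_Q|f|$. For $\vec p=(p_1,\dots,p_m)$ put $\frac1p=\sum_j\frac1{p_j}$. $(\vec r,s)\le\vec p$ means $r_j\le p_j$ for all $j$ and $p\le s$. For weights $w_j$ with $w=\prod_jw_j$, define \[ [\vec w]_{\vec p,(\vec r,s)}:=\sup_Q\Big(\prod_{j=1}^m\langle w_j^{-1}\rangle_{t_j,Q}\Big)\langle w\rangle_{t,Q},\qquad\tfrac1{t_j}=\tfrac1{r_j}-\tfrac1{p_j},\ \tfrac1t=\tfrac1p-\tfrac1s, \] (reciprocal exponent $0$ meaning exponent $\infty$), sup over all cubes; $\vec w\in A_{\vec p,(\vec r,s)}$ means finiteness. The same formula with $s=\infty$ (i.e. $\frac1t=\frac1p$) defines $[\vec w]_{\vec p(s),(\vec r(s),\infty)}$ in terms of the reciprocals $\frac1{p_j}-\frac1{s_j}$, $\frac1{r_j}-\frac1{s_j}$. *)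

theory Defs
  imports "HOL-Analysis.Analysis" "HOL-Probability.Essential_Supremum"
begin

text \<open>Exponents live in (0,\<infinity>] and are modelled as extended reals; the reciprocal
  1/p (with 1/\<infinity> = 0) is the real number recip p.\<close>
definition recip :: "ereal \<Rightarrow> real" where
  "recip x = real_of_ereal (inverse x)"

definition cubes :: "'a::euclidean_space set set" where
  "cubes = {cbox a (a + h *\<^sub>R One) | a h. 0 < h}"

definition enn_powr :: "ennreal \<Rightarrow> real \<Rightarrow> ennreal" where
  "enn_powr x a = (if x = \<infinity> then \<infinity> else ennreal (enn2real x powr a))"

text \<open>Average \<langle>f\<rangle>_{t,Q}, parametrised by the reciprocal exponent \<rho> = 1/t \<ge> 0;
  \<rho> = 0 means t = \<infinity> (essential supremum over Q).\<close>
definition avg :: "real \<Rightarrow> ('a::euclidean_space \<Rightarrow> real) \<Rightarrow> 'a set \<Rightarrow> ennreal" where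
  "avg \<rho> f Q =
     (if \<rho> = 0 then esssup (restrict_space lebesgue Q) (\<lambda>x. ennreal \<bar>f x\<bar>)
      else enn_powr
        ((\<integral>\<^sup>+ x \<in> Q. ennreal (\<bar>f x\<bar> powr (1 / \<rho>)) \<partial>lebesgue) / emeasure lebesgue Q) \<rho>)"

definition weight :: "('a::euclidean_space \<Rightarrow> real) \<Rightarrow> bool" where
  "weight v \<longleftrightarrow> v \<in> borel_measurable lebesgue \<and> (AE x in lebesgue. 0 < v x)
      \<and> (\<forall>K. compact K \<longrightarrow> set_integrable lebesgue K v)"

text \<open>(r,s) \<le> p : r_j \<le> p_j for all j and p \<le> s, where 1/p = \<Sum> 1/p_j.\<close>
definition exp_le :: "nat \<Rightarrow> (nat \<Rightarrow> ereal) \<Rightarrow> ereal \<Rightarrow> (nat \<Rightarrow> ereal) \<Rightarrow> bool" where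
  "exp_le m r s p \<longleftrightarrow> (\<forall>j<m. r j \<le> p j) \<and> recip s \<le> (\<Sum>j<m. recip (p j))"

text \<open>The constant [w]_{p,(r,s)} (possibly \<infinity>), with 1/t_j = 1/r_j - 1/p_j and
  1/t = 1/p - 1/s, w = \<Prod> w_j.\<close>
definition Aconst :: "nat \<Rightarrow> (nat \<Rightarrow> 'a::euclidean_space \<Rightarrow> real) \<Rightarrow> (nat \<Rightarrow> ereal)
    \<Rightarrow> (nat \<Rightarrow> ereal) \<Rightarrow> ereal \<Rightarrow> ennreal" where
  "Aconst m w p r s =
     (SUP Q\<in>cubes.
        (\<Prod>j<m. avg (recip (r j) - recip (p j)) (\<lambda>x. inverse (w j x)) Q)
        * avg ((\<Sum>j<m. recip (p j)) - recip s) (\<lambda>x. \<Prod>j<m. w j x) Q)"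

definition in_A :: "nat \<Rightarrow> (nat \<Rightarrow> 'a::euclidean_space \<Rightarrow> real) \<Rightarrow> (nat \<Rightarrow> ereal)
    \<Rightarrow> (nat \<Rightarrow> ereal) \<Rightarrow> ereal \<Rightarrow> bool" where
  "in_A m w p r s \<longleftrightarrow> Aconst m w p r s < \<infinity>"

text \<open>Shifted exponents: 1/p_j(s) = 1/p_j - 1/s_j, where \<sigma> j = 1/s_j.\<close>
definition shift_exp :: "(nat \<Rightarrow> ereal) \<Rightarrow> (nat \<Rightarrow> real) \<Rightarrow> nat \<Rightarrow> ereal" where
  "shift_exp q \<sigma> j = inverse (ereal (recip (q j) - \<sigma> j))"

end

theory Submission
  imports Defs
begin

lemma recip_inv_ereal: "real_of_ereal (inverse (inverse (ereal x))) = x"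
  by (cases "x = 0") auto

lemma recip_shift: "recip (shift_exp q \<sigma> j) = recip (q j) - \<sigma> j"
  unfolding shift_exp_def recip_def[of "inverse _"] by (rule recip_inv_ereal)

lemma recip_inf: "recip \<infinity> = 0"
  unfolding recip_def by simp

lemma Aconst_shift:
  assumes "(\<Sum>j<m. \<sigma> j) = recip s"
  shows "Aconst m w p r s = Aconst m w (shift_exp p \<sigma>) (shift_exp r \<sigma>) \<infinity>"
proof -
  have "(\<Sum>j<m. recip (shift_exp p \<sigma> j)) - recip \<infinity> = (\<Sum>j<m. recip (p j)) - recip s"
    using assms by (simp add: recip_shift recip_inf sum_subtractf)
  moreover have "\<And>j. recip (shift_exp r \<sigma> j) - recip (shift_exp p \<sigma> j) = recip (r j) - recip (p j)"
    by (simp add: recip_shift)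
  ultimately show ?thesis unfolding Aconst_def by simp
qed

theorem lemma2p11:
  fixes m :: nat and w :: "nat \<Rightarrow> 'a::euclidean_space \<Rightarrow> real"
    and r p :: "nat \<Rightarrow> ereal" and s :: ereal
  assumes "1 \<le> m"
    and "\<forall>j<m. 0 < r j \<and> r j < \<infinity>"
    and "0 < s"
    and "\<forall>j<m. 0 < p j"
    and "exp_le m r s p"
    and "\<forall>j<m. weight (w j)"
  shows "(in_A m w p r s \<longleftrightarrow>
           (\<exists>\<sigma>::nat \<Rightarrow> real. (\<forall>j<m. \<sigma> j \<le> recip (p j)) \<and> (\<Sum>j<m. \<sigma> j) = recip s
              \<and> in_A m w (shift_exp p \<sigma>) (shift_exp r \<sigma>) \<infinity>))
       \<and> (\<forall>\<sigma>::nat \<Rightarrow> real. (\<forall>j<m. \<sigma> j \<le> recip (p j)) \<and> (\<Sum>j<m. \<sigma> j) = recip s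
              \<and> in_A m w (shift_exp p \<sigma>) (shift_exp r \<sigma>) \<infinity>
            \<longrightarrow> Aconst m w p r s = Aconst m w (shift_exp p \<sigma>) (shift_exp r \<sigma>) \<infinity>)"
proof -
  define d where "d = (\<Sum>j<m. recip (p j)) - recip s"
  have d0: "d \<ge> 0" using assms(5) unfolding exp_le_def d_def by simp
  define \<sigma> where "\<sigma> = (\<lambda>j. if j = 0 then recip (p j) - d else recip (p j))"
  have le: "\<forall>j<m. \<sigma> j \<le> recip (p j)" using d0 by (simp add: \<sigma>_def)
  have m0: "0 \<in> {..<m}" using assms(1) by simp
  have "(\<Sum>j<m. \<sigma> j) = (\<Sum>j<m. recip (p j) - (if j = 0 then d else 0))"
    by (intro sum.cong) (auto simp: \<sigma>_def)
  also have "\<dots> = (\<Sum>j<m. recip (p j)) - d"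
    using m0 by (simp add: sum_subtractf)
  finally have sm: "(\<Sum>j<m. \<sigma> j) = recip s" by (simp add: d_def)
  show ?thesis
  proof (intro conjI iffI allI impI)
    assume "in_A m w p r s"
    then show "\<exists>\<sigma>::nat \<Rightarrow> real. (\<forall>j<m. \<sigma> j \<le> recip (p j)) \<and> (\<Sum>j<m. \<sigma> j) = recip s
              \<and> in_A m w (shift_exp p \<sigma>) (shift_exp r \<sigma>) \<infinity>"
      using le sm Aconst_shift[OF sm, of w p r] unfolding in_A_def by metis
  next
    assume "\<exists>\<sigma>::nat \<Rightarrow> real. (\<forall>j<m. \<sigma> j \<le> recip (p j)) \<and> (\<Sum>j<m. \<sigma> j) = recip s
              \<and> in_A m w (shift_exp p \<sigma>) (shift_exp r \<sigma>) \<infinity>"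
    then show "in_A m w p r s" unfolding in_A_def using Aconst_shift by metis
  next
    fix \<tau> :: "nat \<Rightarrow> real"
    assume "(\<forall>j<m. \<tau> j \<le> recip (p j)) \<and> (\<Sum>j<m. \<tau> j) = recip s
              \<and> in_A m w (shift_exp p \<tau>) (shift_exp r \<tau>) \<infinity>"
    then show "Aconst m w p r s = Aconst m w (shift_exp p \<tau>) (shift_exp r \<tau>) \<infinity>"
      using Aconst_shift by metis
  qed
qed

end
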